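(* Let $k\ge1$ be an integer and for $\mathbf{x}=(x_1,\dots,x_k)$ with $x_i\ge 1$ and $\mathbf{y}=(y_1,\dots,y_k)$ with $y_i\ge 0$, not all zero, define $$G(\mathbf{x},\mathbf{y})=\frac{\sum_{i=1}^k y_i\left(1-\frac{1}{x_i}\right)}{\sum_{i=1}^k y_i\prod_{j=i+1}^k x_j}.$$ Then $\min_{\mathbf{y}}\sup_{\mathbf{x}}G(\mathbf{x},\mathbf{y})=\frac{1}{k}$.
   Context: The empty product (for $i=k$) equals $1$. *)

theory Defs
  imports Complex_Main
begin

text \<open>Vectors in R^k are represented as functions nat => real, indexed by 1..k.\<close>

definition G :: "nat \<Rightarrow> (nat \<Rightarrow> real) \<Rightarrow> (nat \<Rightarrow> real) \<Rightarrow> real" where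
  "G k x y = (\<Sum>i=1..k. y i * (1 - 1 / x i)) / (\<Sum>i=1..k. y i * (\<Prod>j=i+1..k. x j))"

definition admissible_x :: "nat \<Rightarrow> (nat \<Rightarrow> real) set" where
  "admissible_x k = {x. \<forall>i\<in>{1..k}. 1 \<le> x i}"

definition admissible_y :: "nat \<Rightarrow> (nat \<Rightarrow> real) set" where
  "admissible_y k = {y. (\<forall>i\<in>{1..k}. 0 \<le> y i) \<and> (\<exists>i\<in>{1..k}. y i \<noteq> 0)}"

definition supG :: "nat \<Rightarrow> (nat \<Rightarrow> real) \<Rightarrow> real" where
  "supG k y = (SUP x\<in>admissible_x k. G k x y)"

end

theory Submission
  imports Defs
begin

lemma tel: "1 \<le> i \<Longrightarrow> i \<le> k \<Longrightarrow> (\<Prod>j=i+1..k. real j / (real j - 1)) = real k / real i"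
proof (induction k)
  case 0 thus ?case by simp
next
  case (Suc k)
  show ?case
  proof (cases "i = Suc k")
    case True then show ?thesis by simp
  next
    case False
    then have ik: "i \<le> k" using Suc by simp
    have "(\<Prod>j=i+1..Suc k. real j / (real j - 1)) = real (Suc k) / (real (Suc k) - 1) * (\<Prod>j=i+1..k. real j / (real j - 1))"
      using ik by simp
    also have "\<dots> = real (Suc k) / real k * (real k / real i)" using Suc.IH Suc.prems ik by simp
    also have "\<dots> = real (Suc k) / real i" using ik Suc.prems by simp
    finally show ?thesis .
  qed
qed

lemma dsum: "(\<Sum>i=1..k. \<Sum>j=i+1..k. (r::nat\<Rightarrow>real) j) = (\<Sum>i=1..k. (real i - 1) * r i)"
proof (induction k)
  case 0 thus ?case by simp
next
  case (Suc k)
  have "(\<Sum>i=1..Suc k. \<Sum>j=i+1..Suc k. r j) = (\<Sum>i=1..k. \<Sum>j=i+1..Suc k. r j)" by simp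
  also have "\<dots> = (\<Sum>i=1..k. (\<Sum>j=i+1..k. r j) + r (Suc k))"
    by (rule sum.cong) auto
  also have "\<dots> = (\<Sum>i=1..k. \<Sum>j=i+1..k. r j) + real k * r (Suc k)"
    by (simp add: sum.distrib)
  also have "\<dots> = (\<Sum>i=1..Suc k. (real i - 1) * r i)" using Suc.IH by simp
  finally show ?case .
qed

lemma upper:
  assumes x: "\<forall>i\<in>{1..k}. 1 \<le> x i"
  shows "real k * (\<Sum>i=1..k. real i * (1 - 1 / x i)) \<le> (\<Sum>i=1..k. real i * (\<Prod>j=i+1..k. x j))"
proof -
  define r where "r j = ln (x j * (real j - 1) / real j)" for j
  have xr: "x j = real j / (real j - 1) * exp (r j)" if "2 \<le> j" "j \<le> k" for j
  proof -
    have "x j \<ge> 1" using x that by auto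
    then have pos: "x j * (real j - 1) / real j > 0" using that by auto
    then have "exp (r j) = x j * (real j - 1) / real j" unfolding r_def by simp
    then show ?thesis using that by (simp add: field_simps)
  qed
  have termL: "real i * (1 - 1 / x i) \<le> 1 + (real i - 1) * r i" if i: "i \<in> {1..k}" for i
  proof (cases "i = 1")
    case True
    then have "x i \<ge> 1" using x i by auto
    then show ?thesis using True by simp
  next
    case False
    then have i2: "2 \<le> i" "i \<le> k" using i by auto
    have x1: "x i \<ge> 1" using x i by auto
    define a where "a = x i * (real i - 1) / real i"
    have apos: "a > 0" using x1 i2 unfolding a_def by auto
    have "ln (1 / a) \<le> 1 / a - 1" using apos by (intro ln_le_minus_one) auto
    then have ra: "1 - r i \<le> 1 / a" using apos unfolding r_def a_def[symmetric] by (simp add: ln_div)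
    have "real i / x i = (real i - 1) * (1 / a)" using x1 i2 unfolding a_def by (simp add: field_simps)
    also have "\<dots> \<ge> (real i - 1) * (1 - r i)" using ra i2 by (intro mult_left_mono) auto
    finally have "(real i - 1) * (1 - r i) \<le> real i / x i" .
    then show ?thesis by (simp add: algebra_simps)
  qed
  have termR: "real k * (1 + (\<Sum>j=i+1..k. r j)) \<le> real i * (\<Prod>j=i+1..k. x j)" if i: "i \<in> {1..k}" for i
  proof -
    have "(\<Prod>j=i+1..k. x j) = (\<Prod>j=i+1..k. real j / (real j - 1) * exp (r j))"
    proof (rule prod.cong)
      fix j assume "j \<in> {i+1..k}"
      then show "x j = real j / (real j - 1) * exp (r j)" using i by (intro xr) auto
    qed simp
    also have "\<dots> = (real k / real i) * exp (\<Sum>j=i+1..k. r j)"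
    proof -
      have "(\<Prod>j=i+1..k. real j / (real j - 1)) = real k / real i" using i by (intro tel) auto
      moreover have "(\<Prod>j=i+1..k. real j / (real j - 1) * exp (r j)) = (\<Prod>j=i+1..k. real j / (real j - 1)) * (\<Prod>j=i+1..k. exp (r j))"
        by (rule prod.distrib)
      moreover have "exp (\<Sum>j=i+1..k. r j) = (\<Prod>j=i+1..k. exp (r j))" by (rule exp_sum) simp
      ultimately show ?thesis by simp
    qed
    finally have e: "(\<Prod>j=i+1..k. x j) = (real k / real i) * exp (\<Sum>j=i+1..k. r j)" .
    have "1 + (\<Sum>j=i+1..k. r j) \<le> exp (\<Sum>j=i+1..k. r j)" by (rule exp_ge_add_one_self)
    then have "real k * (1 + (\<Sum>j=i+1..k. r j)) \<le> real k * exp (\<Sum>j=i+1..k. r j)" by (rule mult_left_mono) simp_all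
    also have "\<dots> = real i * (\<Prod>j=i+1..k. x j)" using i e by simp
    finally show ?thesis .
  qed
  have "real k * (\<Sum>i=1..k. real i * (1 - 1 / x i)) \<le> real k * (\<Sum>i=1..k. 1 + (real i - 1) * r i)"
    using termL by (intro mult_left_mono sum_mono) auto
  also have "\<dots> = (\<Sum>i=1..k. real k * (1 + (\<Sum>j=i+1..k. r j)))"
    using dsum[of r k] by (simp add: sum.distrib sum_distrib_left[symmetric])
  also have "\<dots> \<le> (\<Sum>i=1..k. real i * (\<Prod>j=i+1..k. x j))"
    using termR by (intro sum_mono) auto
  finally show ?thesis .
qed

lemma Dpos:
  assumes y: "y \<in> admissible_y k" and x: "x \<in> admissible_x k"
  shows "0 < (\<Sum>i=1..k. y i * (\<Prod>j=i+1..k. x j))"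
proof -
  have P: "(\<Prod>j=i+1..k. x j) \<ge> 1" if "i \<in> {1..k}" for i
    using x unfolding admissible_x_def by (intro prod_ge_1) auto
  obtain i0 where i0: "i0 \<in> {1..k}" "y i0 \<noteq> 0" using y unfolding admissible_y_def by auto
  have y0: "y i0 > 0" using i0 y unfolding admissible_y_def by force
  have nn: "\<forall>i\<in>{1..k}. 0 \<le> y i * (\<Prod>j=i+1..k. x j)"
  proof
    fix i assume i: "i \<in> {1..k}"
    have "0 \<le> y i" using y i unfolding admissible_y_def by auto
    moreover have "0 \<le> (\<Prod>j=i+1..k. x j)" using P[OF i] by linarith
    ultimately show "0 \<le> y i * (\<Prod>j=i+1..k. x j)" by simp
  qed
  have "y i0 \<le> y i0 * (\<Prod>j=i0+1..k. x j)" using P[OF i0(1)] y0 by simp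
  also have "\<dots> \<le> (\<Sum>i=1..k. y i * (\<Prod>j=i+1..k. x j))"
    using i0 nn by (intro member_le_sum) auto
  finally show ?thesis using y0 by simp
qed

lemma G_le1:
  assumes y: "y \<in> admissible_y k" and x: "x \<in> admissible_x k"
  shows "G k x y \<le> 1"
proof -
  have P: "(\<Prod>j=i+1..k. x j) \<ge> 1" if "i \<in> {1..k}" for i
    using x unfolding admissible_x_def by (intro prod_ge_1) auto
  have "(\<Sum>i=1..k. y i * (1 - 1 / x i)) \<le> (\<Sum>i=1..k. y i * (\<Prod>j=i+1..k. x j))"
  proof (intro sum_mono)
    fix i assume i: "i \<in> {1..k}"
    have yi: "y i \<ge> 0" using y i unfolding admissible_y_def by auto
    have xi: "x i \<ge> 1" using x i unfolding admissible_x_def by auto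
    have "1 - 1 / x i \<le> (\<Prod>j=i+1..k. x j)" using P[OF i] xi by (smt (verit) divide_nonneg_nonneg)
    then show "y i * (1 - 1 / x i) \<le> y i * (\<Prod>j=i+1..k. x j)" using yi by (rule mult_left_mono)
  qed
  then show ?thesis using Dpos[OF y x] unfolding G_def by simp
qed

lemma bdd: "y \<in> admissible_y k \<Longrightarrow> bdd_above ((\<lambda>x. G k x y) ` admissible_x k)"
  using G_le1 by (intro bdd_aboveI[of _ 1]) auto

lemma lower:
  assumes k: "1 \<le> k" and y: "y \<in> admissible_y k"
  shows "1 / real k \<le> supG k y"
proof -
  define A where "A = (\<Sum>i=1..k. y i / real i)"
  obtain i0 where i0: "i0 \<in> {1..k}" "y i0 \<noteq> 0" using y unfolding admissible_y_def by auto
  have y0: "y i0 > 0" using i0 y unfolding admissible_y_def by force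
  have ynn: "\<forall>i\<in>{1..k}. 0 \<le> y i" using y unfolding admissible_y_def by auto
  have "y i0 / real i0 \<le> A" unfolding A_def using i0 ynn by (intro member_le_sum) auto
  moreover have "y i0 / real i0 > 0" using y0 i0 by auto
  ultimately have Apos: "A > 0" by linarith
  have y1: "y 1 \<ge> 0" using ynn k by auto
  define xs where "xs t j = (if j = 1 then t else real j / (real j - 1))" for t :: real and j :: nat
  have key: "1 / real k - y 1 / (t * real k * A) \<le> supG k y" if t: "t \<ge> 1" for t
  proof -
    have adm: "xs t \<in> admissible_x k" unfolding admissible_x_def xs_def using t by auto
    have num: "(\<Sum>i=1..k. y i * (1 - 1 / xs t i)) = (\<Sum>i=1..k. y i / real i - (if i = 1 then y 1 / t else 0))"
    proof (rule sum.cong)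
      fix i assume i: "i \<in> {1..k}"
      show "y i * (1 - 1 / xs t i) = y i / real i - (if i = 1 then y 1 / t else 0)"
      proof (cases "i = 1")
        case True then show ?thesis unfolding xs_def by (simp add: algebra_simps)
      next
        case False
        then have "real i \<ge> 2" using i by auto
        then show ?thesis using False unfolding xs_def by (simp add: field_simps)
      qed
    qed simp
    also have "\<dots> = A - y 1 / t" unfolding A_def using k by (simp add: sum_subtractf)
    finally have num: "(\<Sum>i=1..k. y i * (1 - 1 / xs t i)) = A - y 1 / t" .
    have den: "(\<Sum>i=1..k. y i * (\<Prod>j=i+1..k. xs t j)) = real k * A"
    proof -
      have "(\<Sum>i=1..k. y i * (\<Prod>j=i+1..k. xs t j)) = (\<Sum>i=1..k. real k * (y i / real i))"
      proof (rule sum.cong)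
        fix i assume i: "i \<in> {1..k}"
        have "(\<Prod>j=i+1..k. xs t j) = (\<Prod>j=i+1..k. real j / (real j - 1))"
          using i unfolding xs_def by (intro prod.cong) auto
        also have "\<dots> = real k / real i" using i by (intro tel) auto
        finally show "y i * (\<Prod>j=i+1..k. xs t j) = real k * (y i / real i)" by simp
      qed simp
      then show ?thesis unfolding A_def by (simp add: sum_distrib_left)
    qed
    have "G k (xs t) y = (A - y 1 / t) / (real k * A)" unfolding G_def num den ..
    also have "\<dots> = 1 / real k - y 1 / (t * real k * A)" using Apos k t by (simp add: field_simps)
    finally have "G k (xs t) y = 1 / real k - y 1 / (t * real k * A)" .
    moreover have "G k (xs t) y \<le> supG k y" unfolding supG_def
      using adm bdd[OF y] by (intro cSUP_upper) auto
    ultimately show ?thesis by simp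
  qed
  show ?thesis
  proof (rule field_le_epsilon)
    fix e :: real assume e: "0 < e"
    define t where "t = max 1 (y 1 / (real k * A * e))"
    have t1: "t \<ge> 1" unfolding t_def by simp
    have kA: "real k * A > 0" using k Apos by simp
    have "y 1 / (real k * A * e) \<le> t" unfolding t_def by simp
    then have "y 1 \<le> t * (real k * A * e)" using kA e by (simp add: divide_le_eq mult.commute)
    moreover have "t * real k * A > 0" using kA t1 by (simp add: mult.assoc)
    ultimately have "y 1 / (t * real k * A) \<le> e" by (simp add: divide_le_eq mult_ac)
    then show "1 / real k \<le> supG k y + e" using key[OF t1] by linarith
  qed
qed

theorem theorem4:
  fixes k :: nat
  assumes "1 \<le> k"
  shows "(\<exists>y\<in>admissible_y k. supG k y = 1 / real k) \<and>
         (\<forall>y\<in>admissible_y k. 1 / real k \<le> supG k y)"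
proof
  show "\<forall>y\<in>admissible_y k. 1 / real k \<le> supG k y" using lower assms by blast
  let ?y = "\<lambda>i. real i"
  have y: "?y \<in> admissible_y k" unfolding admissible_y_def using assms by auto
  have le: "G k x ?y \<le> 1 / real k" if x: "x \<in> admissible_x k" for x
  proof -
    have D: "0 < (\<Sum>i=1..k. ?y i * (\<Prod>j=i+1..k. x j))" using Dpos[OF y x] .
    have "real k * (\<Sum>i=1..k. ?y i * (1 - 1 / x i)) \<le> (\<Sum>i=1..k. ?y i * (\<Prod>j=i+1..k. x j))"
      using upper x unfolding admissible_x_def by blast
    then show ?thesis unfolding G_def using D assms by (simp add: field_simps)
  qed
  have ne: "admissible_x k \<noteq> {}" unfolding admissible_x_def by auto
  have "supG k ?y \<le> 1 / real k" unfolding supG_def using ne le by (intro cSUP_least) auto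
  moreover have "1 / real k \<le> supG k ?y" using lower assms y by blast
  ultimately show "\<exists>y\<in>admissible_y k. supG k y = 1 / real k" using y by force
qed

end
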